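(* For every $\delta\in\mathbb R$, $$\lim_{T\to\infty,\,T\in2\mathbb N}(Q_T)^{-1}(e^{-\delta})=(Q_\infty)^{-1}(e^{-\delta}\wedge1).$$
   Context: $(S_n)$ is the simple symmetric random walk on $\mathbb Z$ started at $0$ with law $\mathbf P$. For $T\in2\mathbb N\cup\{\infty\}$, $\tau^T_1:=\inf\{n>0:S_n\in\{-T,0,T\}\}$ (for $T=\infty$ the first return time to $0$) and $Q_T(\lambda):=\mathbf E[e^{-\lambda\tau^T_1}]$. For $T<\infty$, $Q_T$ is finite, analytic, strictly decreasing on $(\lambda_0^T,\infty)$, $\lambda_0^T:=-\frac12\log(1+\tan^2(\pi/T))<0$, with $Q_T(\lambda)\to\infty$ as $\lambda\downarrow\lambda_0^T$ and $\to0$ as $\lambda\to\infty$; $(Q_T)^{-1}:(0,\infty)\to(\lambda^T_0,\infty)$ is its inverse. $Q_\infty(\lambda)=1-\sqrt{1-e^{-2\lambda}}$ for $\lambda\ge0$ (and $+\infty$ for $\lambda<0$), with inverse $(Q_\infty)^{-1}:(0,1]\to[0,\infty)$. *)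

theory Defs
  imports Complex_Main "HOL-Library.Extended_Nonnegative_Real" "HOL-Library.Extended_Nat"
begin

text \<open>Simple symmetric random walk: a path of length n is a list of n steps in {-1,1},
  each having probability 2^(-n).
  T :: enat encodes T in 2N (finite) or T = infinity.\<close>

definition hitset :: "enat \<Rightarrow> int \<Rightarrow> bool" where
  "hitset T x \<longleftrightarrow> x = 0 \<or> enat (nat \<bar>x\<bar>) = T"

definition steps :: "nat \<Rightarrow> int list set" where
  "steps n = {xs. length xs = n \<and> set xs \<subseteq> {-1, 1}}"

definition walk :: "int list \<Rightarrow> nat \<Rightarrow> int" where
  "walk xs k = sum_list (take k xs)"

text \<open>P(tau^T_1 = n), with tau^T_1 = inf{n > 0 : S_n in {-T,0,T}}.\<close>
definition tau_prob :: "enat \<Rightarrow> nat \<Rightarrow> real" where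
  "tau_prob T n = (if n = 0 then 0 else
     real (card {xs \<in> steps n. (\<forall>k. 0 < k \<and> k < n \<longrightarrow> \<not> hitset T (walk xs k))
                             \<and> hitset T (walk xs n)}) / 2 ^ n)"

text \<open>Q_T(lambda) = E[exp(-lambda tau^T_1)], as an extended nonnegative real
  (tau^T_1 is a.s. finite, so the expectation is this series).\<close>
definition Q :: "enat \<Rightarrow> real \<Rightarrow> ennreal" where
  "Q T l = (\<Sum>n. ennreal (exp (- l * real n) * tau_prob T n))"

definition lambda0 :: "nat \<Rightarrow> real" where
  "lambda0 T = - (1/2) * ln (1 + (tan (pi / real T))\<^sup>2)"

definition Qinv_fin :: "nat \<Rightarrow> real \<Rightarrow> real" where
  "Qinv_fin T y = (THE l. lambda0 T < l \<and> Q (enat T) l = ennreal y)"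

definition Qinv_inf :: "real \<Rightarrow> real" where
  "Qinv_inf y = (THE l. 0 \<le> l \<and> Q \<infinity> l = ennreal y)"

end

theory Submission
  imports Defs "HOL-Real_Asymp.Real_Asymp"
begin


fun W :: "(int \<Rightarrow> bool) \<Rightarrow> (int \<Rightarrow> real) \<Rightarrow> nat \<Rightarrow> int \<Rightarrow> real" where
  "W H f 0 x = (if H x then f x else 0)"
| "W H f (Suc m) x = (if H x then 0 else (W H f m (x-1) + W H f m (x+1))/2)"

lemma finite_steps: "finite (steps n)"
proof -
  have "steps n = {xs. set xs \<subseteq> {-1,1} \<and> length xs = n}" by (auto simp: steps_def)
  then show ?thesis using finite_lists_length_eq[of "{-1,1::int}" n] by simp
qed

lemma steps_Suc_card:
  "card {xs \<in> steps (Suc n). P xs} = card {ys \<in> steps n. P ((-1) # ys)} + card {ys \<in> steps n. P (1 # ys)}"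
proof -
  have eq: "{xs \<in> steps (Suc n). P xs} = (Cons (-1)) ` {ys \<in> steps n. P ((-1) # ys)} \<union> (Cons 1) ` {ys \<in> steps n. P (1 # ys)}"
  proof (rule set_eqI, rule iffI)
    fix xs assume "xs \<in> {xs \<in> steps (Suc n). P xs}"
    then obtain s ys where xs: "xs = s # ys" and "s \<in> {-1,1}" "ys \<in> steps n" "P xs"
      by (cases xs) (auto simp: steps_def)
    then show "xs \<in> (Cons (-1)) ` {ys \<in> steps n. P ((-1) # ys)} \<union> (Cons 1) ` {ys \<in> steps n. P (1 # ys)}"
      by auto
  qed (auto simp: steps_def)
  have "card {xs \<in> steps (Suc n). P xs} = card ((Cons (-1)) ` {ys \<in> steps n. P ((-1) # ys)}) + card ((Cons 1) ` {ys \<in> steps n. P (1 # ys)})"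
    unfolding eq by (rule card_Un_disjoint) (auto intro: finite_subset[OF _ finite_steps])
  also have "\<dots> = card {ys \<in> steps n. P ((-1) # ys)} + card {ys \<in> steps n. P (1 # ys)}"
    by (simp add: card_image)
  finally show ?thesis .
qed

lemma walk_0[simp]: "walk xs 0 = 0" by (simp add: walk_def)
lemma walk_Cons_Suc[simp]: "walk (s # ys) (Suc k) = s + walk ys k" by (simp add: walk_def)

lemma steps_0: "steps 0 = {[]}" by (auto simp: steps_def)

lemma card_W:
  "real (card {xs \<in> steps m. (\<forall>k<m. \<not> H (x + walk xs k)) \<and> H (x + walk xs m)}) = 2^m * W H (\<lambda>_. 1) m x"
proof (induction m arbitrary: x)
  case 0
  then show ?case by (simp add: steps_0)
next
  case (Suc m)
  have P: "\<And>s ys. ((\<forall>k<Suc m. \<not> H (x + walk (s#ys) k)) \<and> H (x + walk (s#ys) (Suc m))) \<longleftrightarrow>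
      \<not> H x \<and> ((\<forall>k<m. \<not> H ((x+s) + walk ys k)) \<and> H ((x+s) + walk ys m))"
    by (auto simp: less_Suc_eq_0_disj add.assoc)
  show ?case
  proof (cases "H x")
    case True
    then show ?thesis unfolding steps_Suc_card P by simp
  next
    case False
    then show ?thesis unfolding steps_Suc_card P
      using Suc.IH[of "x-1"] Suc.IH[of "x+1"] by (simp add: algebra_simps)
  qed
qed

lemma W_sym:
  assumes hs: "\<And>x. H (-x) = H x"
  shows "W H (\<lambda>_. 1) m (-x) = W H (\<lambda>_. 1) m x"
proof (induction m arbitrary: x)
  case 0 show ?case using hs[of x] by simp
next
  case (Suc m)
  have e1: "- x - 1 = - (x + 1)" by simp
  have e2: "- x + 1 = - (x - 1)" by simp
  have "W H (\<lambda>_. 1) m (- x - 1) = W H (\<lambda>_. 1) m (x+1)" unfolding e1 by (rule Suc.IH)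
  moreover have "W H (\<lambda>_. 1) m (- x + 1) = W H (\<lambda>_. 1) m (x-1)" unfolding e2 by (rule Suc.IH)
  ultimately show ?case using hs[of x] by simp
qed

definition pp :: "(int \<Rightarrow> bool) \<Rightarrow> nat \<Rightarrow> real" where
  "pp H n = (if n = 0 then 0 else W H (\<lambda>_. 1) (n - 1) 1)"

lemma hitset_sym: "hitset T (-x) = hitset T x" by (simp add: hitset_def)

lemma tau_prob_pp: "tau_prob T n = pp (hitset T) n"
proof (cases n)
  case 0 then show ?thesis by (simp add: tau_prob_def pp_def)
next
  case (Suc m)
  let ?H = "hitset T"
  have P: "\<And>s ys. ((\<forall>k. 0 < k \<and> k < Suc m \<longrightarrow> \<not> ?H (walk (s#ys) k)) \<and> ?H (walk (s#ys) (Suc m))) \<longleftrightarrow>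
      ((\<forall>k<m. \<not> ?H (s + walk ys k)) \<and> ?H (s + walk ys m))"
  proof (intro iffI conjI allI impI)
    fix s ys k
    assume a: "(\<forall>k. 0 < k \<and> k < Suc m \<longrightarrow> \<not> ?H (walk (s#ys) k)) \<and> ?H (walk (s#ys) (Suc m))"
    { assume "k < m" then show "\<not> ?H (s + walk ys k)" using a[THEN conjunct1, rule_format, of "Suc k"] by simp }
    show "?H (s + walk ys m)" using a by simp
  next
    fix s ys k
    assume a: "(\<forall>k<m. \<not> ?H (s + walk ys k)) \<and> ?H (s + walk ys m)"
    { assume "0 < k \<and> k < Suc m" then show "\<not> ?H (walk (s#ys) k)" using a by (cases k) auto }
    show "?H (walk (s#ys) (Suc m))" using a by simp
  qed
  have "real (card {xs \<in> steps (Suc m). (\<forall>k. 0 < k \<and> k < Suc m \<longrightarrow> \<not> ?H (walk xs k)) \<and> ?H (walk xs (Suc m))})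
     = 2^m * W ?H (\<lambda>_. 1) m (-1) + 2^m * W ?H (\<lambda>_. 1) m 1"
    unfolding steps_Suc_card P using card_W[of m ?H "-1"] card_W[of m ?H 1] by simp
  also have "\<dots> = 2^(Suc m) * W ?H (\<lambda>_. 1) m 1"
    using W_sym[of ?H m 1] hitset_sym by simp
  finally show ?thesis using Suc by (simp add: tau_prob_def pp_def)
qed



fun V :: "(int \<Rightarrow> bool) \<Rightarrow> (int \<Rightarrow> real) \<Rightarrow> nat \<Rightarrow> int \<Rightarrow> real" where
  "V H f 0 x = (if H x then 0 else f x)"
| "V H f (Suc m) x = (if H x then 0 else (V H f m (x-1) + V H f m (x+1))/2)"

lemma W_nonneg: "(\<And>x. 0 \<le> f x) \<Longrightarrow> 0 \<le> W H f m x"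
  by (induction m arbitrary: x) auto

lemma V_nonneg: "(\<And>x. 0 \<le> f x) \<Longrightarrow> 0 \<le> V H f m x"
  by (induction m arbitrary: x) auto

lemma W_add: "W H (\<lambda>x. f x + g x) m x = W H f m x + W H g m x"
  by (induction m arbitrary: x) (auto simp: field_simps)

lemma W_scale: "W H (\<lambda>x. a * f x) m x = a * W H f m x"
  by (induction m arbitrary: x) (auto simp: field_simps)

lemma W_cong: "(\<And>x. H x \<Longrightarrow> f x = g x) \<Longrightarrow> W H f m x = W H g m x"
  by (induction m arbitrary: x) auto

lemma V_scale: "V H (\<lambda>x. a * f x) m x = a * V H f m x"
  by (induction m arbitrary: x) (auto simp: field_simps)

lemma V_mono_on:
  assumes cl: "\<And>x. x \<in> S \<Longrightarrow> \<not> H x \<Longrightarrow> x - 1 \<in> S \<and> x + 1 \<in> S"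
    and le: "\<And>x. x \<in> S \<Longrightarrow> \<not> H x \<Longrightarrow> f x \<le> g x"
  shows "x \<in> S \<Longrightarrow> V H f m x \<le> V H g m x"
proof (induction m arbitrary: x)
  case 0 then show ?case using le by simp
next
  case (Suc m)
  show ?case
  proof (cases "H x")
    case False
    then have "x - 1 \<in> S" "x + 1 \<in> S" using cl Suc.prems by auto
    then show ?thesis using Suc.IH False by (simp add: add_mono divide_right_mono)
  qed simp
qed

lemma V_eigen:
  assumes "\<And>x. h (x-1) + h (x+1) = 2 * c * h x" "\<And>x. H x \<Longrightarrow> h x = 0"
  shows "V H h m x = c^m * h x"
  using assms
proof (induction m arbitrary: x)
  case (Suc m)
  have "c^m * h (x-1) + c^m * h (x+1) = c^m * (2 * c * h x)" unfolding distrib_left[symmetric] Suc.prems(1)[of x] ..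
  then show ?case using Suc by (simp add: field_simps)
qed simp

lemma WV_identity:
  assumes harm: "\<And>x. \<not> H x \<Longrightarrow> h (x-1) + h (x+1) = 2 * h x"
  shows "(\<Sum>j\<le>m. W H h j x) + V H h m x = h x"
proof (induction m arbitrary: x)
  case 0 then show ?case by simp
next
  case (Suc m)
  show ?case
  proof (cases "H x")
    case True
    have "(\<Sum>j\<le>Suc m. W H h j x) = W H h 0 x + (\<Sum>j\<le>m. W H h (Suc j) x)"
      by (rule sum.atMost_Suc_shift)
    then show ?thesis using True by simp
  next
    case False
    have s1: "(\<Sum>j\<le>Suc m. W H h j x) = W H h 0 x + (\<Sum>j\<le>m. W H h (Suc j) x)"
      by (rule sum.atMost_Suc_shift)
    have "(\<Sum>j\<le>m. W H h (Suc j) x) = ((\<Sum>j\<le>m. W H h j (x-1)) + (\<Sum>j\<le>m. W H h j (x+1))) / 2"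
      using False by (simp add: sum.distrib sum_divide_distrib[symmetric])
    then have "(\<Sum>j\<le>Suc m. W H h j x) + V H h (Suc m) x =
       ((\<Sum>j\<le>m. W H h j (x-1)) + V H h m (x-1) + ((\<Sum>j\<le>m. W H h j (x+1)) + V H h m (x+1))) / 2"
      using False s1 by (simp add: field_simps)
    also have "\<dots> = h x" using Suc.IH[of "x-1"] Suc.IH[of "x+1"] harm[OF False] by simp
    finally show ?thesis .
  qed
qed

lemma W_le_H:
  assumes HH: "\<And>x. H x \<Longrightarrow> H' x" and nn: "\<And>x. 0 \<le> f x" and supp: "\<And>x. H' x \<Longrightarrow> \<not> H x \<Longrightarrow> f x = 0"
  shows "W H' f m x \<le> W H f m x"
proof (induction m arbitrary: x)
  case 0 then show ?case using HH supp by auto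
next
  case (Suc m)
  show ?case
  proof (cases "H' x")
    case True then show ?thesis using W_nonneg[OF nn] by simp
  next
    case False
    then have "\<not> H x" using HH by auto
    then show ?thesis using False Suc.IH[of "x-1"] Suc.IH[of "x+1"] by simp
  qed
qed

lemma V_le_H:
  assumes HH: "\<And>x. H x \<Longrightarrow> H' x" and nn: "\<And>x. 0 \<le> f x"
  shows "V H' f m x \<le> V H f m x"
proof (induction m arbitrary: x)
  case 0 then show ?case using HH nn by auto
next
  case (Suc m)
  show ?case
  proof (cases "H' x")
    case True then show ?thesis using V_nonneg[OF nn] by simp
  next
    case False
    then have "\<not> H x" using HH by auto
    then show ?thesis using False Suc.IH[of "x-1"] Suc.IH[of "x+1"] by simp
  qed
qed

lemma W_local:
  "(\<And>y. \<bar>y - x\<bar> \<le> int m \<Longrightarrow> H1 y = H2 y) \<Longrightarrow> W H1 f m x = W H2 f m x"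
proof (induction m arbitrary: x)
  case 0 then show ?case by simp
next
  case (Suc m)
  have a: "W H1 f m (x-1) = W H2 f m (x-1)" by (rule Suc.IH) (use Suc.prems in auto)
  have b: "W H1 f m (x+1) = W H2 f m (x+1)" by (rule Suc.IH) (use Suc.prems in auto)
  have "H1 x = H2 x" using Suc.prems[of x] by simp
  then show ?case using a b by simp
qed

abbreviation GG where "GG H \<equiv> W H (\<lambda>_. 1)"
abbreviation VV where "VV H \<equiv> V H (\<lambda>_. 1)"

lemma G_ident: "(\<Sum>j\<le>m. GG H j x) + VV H m x = 1"
  using WV_identity[where H=H and h="\<lambda>_. 1" and m=m and x=x] by simp

lemma G_le1: "GG H m x \<le> 1"
proof -
  have "GG H m x \<le> (\<Sum>j\<le>m. GG H j x)"
    by (rule member_le_sum) (auto intro: W_nonneg)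
  then show ?thesis using G_ident[where m=m and H=H and x=x] V_nonneg[where f="\<lambda>_. 1" and H=H and m=m and x=x] by simp
qed

lemma G_Suc: "GG H (Suc m) x = VV H m x - VV H (Suc m) x"
  using G_ident[where m=m and H=H and x=x] G_ident[where m="Suc m" and H=H and x=x] by simp

lemma VV_block: "m \<le> M \<Longrightarrow> (\<Sum>j\<in>{m..<M}. GG H (Suc j) x) = VV H m x - VV H M x"
proof (induction M rule: dec_induct)
  case base then show ?case by simp
next
  case (step M) then show ?case by (simp del: W.simps V.simps add: G_Suc)
qed

lemma pp_nonneg: "0 \<le> pp H n" by (simp add: pp_def W_nonneg)
lemma pp_le1: "pp H n \<le> 1" by (simp add: pp_def G_le1)
lemma pp_0[simp]: "pp H 0 = 0" by (simp add: pp_def)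
lemma pp_Suc: "pp H (Suc j) = GG H j 1" by (simp add: pp_def)
lemma pp_2: "H 0 \<Longrightarrow> \<not> H 1 \<Longrightarrow> pp H 2 \<ge> 1/2"
  by (simp add: pp_def numeral_2_eq_2)

lemma pp_partial: "(\<Sum>n<m+2. pp H n) = 1 - VV H m 1"
proof -
  have "(\<Sum>n<m+2. pp H n) = (\<Sum>n<Suc (Suc m). pp H n)" by simp
  also have "\<dots> = pp H 0 + (\<Sum>n<Suc m. pp H (Suc n))" by (rule sum.lessThan_Suc_shift)
  also have "\<dots> = (\<Sum>j<Suc m. GG H j 1)" by (simp del: W.simps add: pp_Suc)
  also have "\<dots> = (\<Sum>j\<le>m. GG H j 1)" by (simp only: lessThan_Suc_atMost)
  finally show ?thesis using G_ident[where m=m and H=H and x=1] by simp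
qed



lemma HT_iff: "hitset (enat (2*k)) x \<longleftrightarrow> x = 0 \<or> \<bar>x\<bar> = 2 * int k"
  by (auto simp: hitset_def)

lemma HI_iff: "hitset \<infinity> x \<longleftrightarrow> x = 0"
  by (auto simp: hitset_def)

locale Tk =
  fixes k :: nat
  assumes k2: "k \<ge> 2"
begin

definition "a = pi / (2 * real k)"
definition "c = cos a"
definition "s = sin a"
definition "phi x = sin (a * real_of_int x)"
abbreviation "H \<equiv> hitset (enat (2*k))"

lemma a_pos: "0 < a" and a_le: "a \<le> pi/4"
proof -
  show "0 < a" using k2 by (simp add: a_def)
  have "2 * real k \<ge> 4" using k2 by simp
  then show "a \<le> pi/4" unfolding a_def using pi_gt_zero
    by (intro divide_left_mono) auto
qed

lemma c_pos: "0 < c" and c_lt1: "c < 1" and s_pos: "0 < s"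
proof -
  show "0 < c" unfolding c_def using a_pos a_le by (intro cos_gt_zero_pi) auto
  show "c < 1" unfolding c_def using a_pos a_le cos_monotone_0_pi[of 0 a] pi_gt_zero by simp
  show "0 < s" unfolding s_def using a_pos a_le by (intro sin_gt_zero) auto
qed

lemma phi_eig: "phi (x-1) + phi (x+1) = 2 * c * phi x"
proof -
  have "phi (x-1) + phi (x+1) = sin (a * x - a) + sin (a * x + a)"
    by (simp add: phi_def algebra_simps)
  also have "\<dots> = 2 * c * phi x"
    by (simp add: sin_add sin_diff c_def phi_def)
  finally show ?thesis .
qed

lemma phi_H: "H x \<Longrightarrow> phi x = 0"
proof -
  assume "H x"
  then have "x = 0 \<or> x = 2 * int k \<or> x = - (2 * int k)" unfolding HT_iff by auto
  moreover have "a * (2 * real k) = pi" using k2 by (simp add: a_def)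
  ultimately show "phi x = 0" by (auto simp: phi_def)
qed

lemma phi_le1: "phi x \<le> 1" by (simp add: phi_def)

lemma phi_ge_s: assumes "1 \<le> x" "x \<le> 2 * int k - 1" shows "s \<le> phi x"
proof -
  have ak: "a * (2 * real k) = pi" using k2 by (simp add: a_def)
  { fix z :: int assume z1: "1 \<le> z" and z2: "z \<le> int k"
    have "a * real_of_int z \<le> a * real k" using a_pos z2 by (simp add: mult_left_mono)
    also have "\<dots> = pi/2" using ak by (simp add: algebra_simps)
    finally have le: "a * real_of_int z \<le> pi/2" .
    have az: "a \<le> a * real_of_int z" using a_pos z1 by simp
    have "sin a \<le> sin (a * real_of_int z)"
      using az le a_pos pi_gt_zero by (intro sin_monotone_2pi_le) linarith+ }
  note mono = this
  show ?thesis
  proof (cases "x \<le> int k")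
    case True then show ?thesis using mono[of x] assms by (simp add: s_def phi_def)
  next
    case False
    have "phi x = sin (pi - a * real_of_int x)" by (simp add: phi_def)
    also have "pi - a * real_of_int x = a * real_of_int (2 * int k - x)"
      using ak by (simp add: algebra_simps)
    finally show ?thesis using mono[of "2 * int k - x"] assms False by (simp add: s_def)
  qed
qed

lemma VT_upper: "VV H m 1 \<le> c^m"
proof -
  let ?S = "{0..2 * int k}"
  have "VV H m 1 \<le> V H (\<lambda>x. (1/s) * phi x) m 1"
  proof (rule V_mono_on[where S = ?S])
    fix x assume "x \<in> ?S" "\<not> H x"
    then show "x - 1 \<in> ?S \<and> x + 1 \<in> ?S" unfolding HT_iff by auto
  next
    fix x assume "x \<in> ?S" "\<not> H x"
    then have "1 \<le> x" "x \<le> 2 * int k - 1" unfolding HT_iff by auto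
    then show "1 \<le> (1/s) * phi x" using phi_ge_s s_pos by (simp add: field_simps)
  qed (use k2 in auto)
  also have "\<dots> = (1/s) * (c^m * phi 1)"
    by (simp only: V_scale V_eigen[OF phi_eig phi_H])
  also have "phi 1 = s" by (simp add: phi_def s_def)
  finally show ?thesis using s_pos by simp
qed

lemma VT_lower: "c^m * s \<le> VV H m 1"
proof -
  have "V H phi m 1 \<le> VV H m 1"
    by (rule V_mono_on[where S = UNIV]) (auto simp: phi_le1)
  moreover have "V H phi m 1 = c^m * phi 1" by (rule V_eigen[OF phi_eig phi_H])
  ultimately show ?thesis by (simp add: phi_def s_def)
qed

lemma ppT_bound: "pp H n \<le> c^n / c^2"
proof (cases n)
  case 0 then show ?thesis using c_pos by simp
next
  case (Suc n') note n = this
  show ?thesis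
  proof (cases n')
    case 0
    have "\<not> H 1" using k2 unfolding HT_iff by auto
    then show ?thesis using n 0 c_pos by (simp add: pp_def)
  next
    case (Suc j)
    have "pp H n = GG H (Suc j) 1" using n Suc by (simp add: pp_def del: W.simps)
    also have "\<dots> = VV H j 1 - VV H (Suc j) 1" by (rule G_Suc)
    also have "\<dots> \<le> c^j" using VT_upper[of j] V_nonneg[of "\<lambda>_. 1" H "Suc j" 1] by simp
    also have "c^j = c^n / c^2" using n Suc c_pos by (simp add: power2_eq_square)
    finally show ?thesis .
  qed
qed

lemma block:
  assumes K: "c^K \<le> s/2"
  shows "(\<Sum>n\<in>{m+2..<m+K+4}. (1/c)^n * pp H n) \<ge> s/2"
proof -
  let ?M = "m + K + 2"
  have e: "m + K + 4 = ?M + 2" by simp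
  have "(\<Sum>n\<in>{m+2..<m+K+4}. (1/c)^n * pp H n) \<ge> (\<Sum>n\<in>{m+2..<m+K+4}. (1/c)^(m+2) * pp H n)"
  proof (rule sum_mono)
    fix n assume "n \<in> {m+2..<m+K+4}"
    then have "(1/c)^(m+2) \<le> (1/c)^n" using c_pos c_lt1 by (intro power_increasing) auto
    then show "(1/c)^(m+2) * pp H n \<le> (1/c)^n * pp H n" using pp_nonneg by (rule mult_right_mono)
  qed
  also have "(\<Sum>n\<in>{m+2..<m+K+4}. (1/c)^(m+2) * pp H n) = (1/c)^(m+2) * (\<Sum>n\<in>{m+2..<?M+2}. pp H n)"
    unfolding sum_distrib_left[symmetric] e ..
  also have "(\<Sum>n\<in>{m+2..<?M+2}. pp H n) = (\<Sum>j\<in>{m..<?M}. pp H (j+2))"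
    by (rule sum.shift_bounds_nat_ivl)
  also have "\<dots> = (\<Sum>j\<in>{m..<?M}. GG H (Suc j) 1)"
    by (simp add: pp_def del: W.simps)
  also have "\<dots> = VV H m 1 - VV H ?M 1" by (rule VV_block) simp
  finally have 1: "(\<Sum>n\<in>{m+2..<m+K+4}. (1/c)^n * pp H n) \<ge> (1/c)^(m+2) * (VV H m 1 - VV H ?M 1)" .
  have "VV H ?M 1 \<le> c^(m+2) * c^K" using VT_upper[of ?M] by (simp add: power_add algebra_simps)
  also have "\<dots> \<le> c^m * (s/2)"
  proof (rule mult_mono)
    have "c^2 \<le> 1" using c_pos c_lt1 by (simp add: power_le_one)
    then show "c^(m+2) \<le> c^m" using c_pos by (simp add: power_add mult_left_le power2_eq_square)
  qed (use K c_pos s_pos in auto)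
  finally have "VV H m 1 - VV H ?M 1 \<ge> c^m * s / 2" using VT_lower[of m] by simp
  then have "(1/c)^(m+2) * (VV H m 1 - VV H ?M 1) \<ge> (1/c)^(m+2) * (c^m * s / 2)"
    using c_pos by (intro mult_left_mono) auto
  moreover have "(1/c)^(m+2) * (c^m * s / 2) = s / 2 / c^2"
    using c_pos by (simp add: power_add field_simps power2_eq_square)
  moreover have "s / 2 / c^2 \<ge> s/2"
  proof -
    have "c^2 \<le> 1" using c_pos c_lt1 by (simp add: power_le_one)
    then have "(s/2) / 1 \<le> (s/2) / c^2" using s_pos c_pos by (intro divide_left_mono) auto
    then show ?thesis by simp
  qed
  ultimately show ?thesis using 1 by linarith
qed

lemma diverge: "\<exists>N. (\<Sum>n<N. (1/c)^n * pp H n) > y"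
proof (rule ccontr)
  assume "\<not> ?thesis"
  then have b: "\<And>N. (\<Sum>n<N. (1/c)^n * pp H n) \<le> y" by (simp add: not_less)
  have "summable (\<lambda>n. (1/c)^n * pp H n)"
    by (rule summableI_nonneg_bounded[OF _ b]) (use c_pos pp_nonneg in auto)
  then obtain N where N: "\<And>m n. m \<ge> N \<Longrightarrow> norm (\<Sum>i\<in>{m..<n}. (1/c)^i * pp H i) < s/2"
    unfolding summable_Cauchy using s_pos by (meson half_gt_zero)
  obtain K where K: "c^K \<le> s/2"
  proof -
    have "(\<lambda>n. c^n) \<longlonglongrightarrow> 0" using c_pos c_lt1 by (intro LIMSEQ_power_zero) auto
    then have "\<forall>\<^sub>F n in sequentially. c^n < s/2" using s_pos by (intro order_tendstoD) auto
    then obtain K where "c^K < s/2" by (meson eventually_sequentially order_refl)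
    then show ?thesis using that[of K] by simp
  qed
  have "s/2 \<le> (\<Sum>n\<in>{N+2..<N+K+4}. (1/c)^n * pp H n)" by (rule block[OF K])
  also have "\<dots> \<le> norm (\<Sum>n\<in>{N+2..<N+K+4}. (1/c)^n * pp H n)" by simp
  also have "\<dots> < s/2" by (rule N) simp
  finally show False by simp
qed

end



definition F :: "(nat \<Rightarrow> real) \<Rightarrow> real \<Rightarrow> real" where
  "F p l = (\<Sum>n. exp (- l * real n) * p n)"

lemma exp_pow: "exp (- l * real n) = exp (- l) ^ n"
  unfolding mult.commute[of "-l"] exp_of_nat_mult ..

lemma exp_pow2: "exp (- (l * real n)) = exp (- l) ^ n"
  using exp_pow[of l n] by simp

lemma F_alt: "F p l = (\<Sum>n. p n * exp (- l) ^ n)"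
  unfolding F_def exp_pow by (simp only: mult.commute)

lemma geo_summable_bound:
  fixes p :: "nat \<Rightarrow> real" and B r K :: real
  assumes nn: "\<And>n. 0 \<le> p n" and bd: "\<And>n. p n \<le> B * r^n" and r: "r > 0" and K: "0 \<le> K" "K * r < 1"
  shows "summable (\<lambda>n. p n * K^n)"
proof (rule summable_comparison_test'[where g = "\<lambda>n. B * (K*r)^n"])
  show "summable (\<lambda>n. B * (K * r) ^ n)" using K r
    by (intro summable_mult summable_geometric) (simp add: mult_nonneg_nonneg)
  fix n
  have "p n * K^n \<le> B * r^n * K^n" using bd K by (intro mult_right_mono) auto
  then show "norm (p n * K ^ n) \<le> B * (K * r) ^ n" using nn K by (simp add: power_mult_distrib algebra_simps)
qed

lemma F_summable:
  assumes nn: "\<And>n. 0 \<le> p n" and bd: "\<And>n. p n \<le> B * r^n" and r: "r > 0" and l: "l > ln r"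
  shows "summable (\<lambda>n. exp (- l * real n) * p n)"
proof -
  have "exp (-l) * r < 1"
  proof -
    have "exp (-l) * r = exp (- l + ln r)" using r by (simp add: exp_diff exp_minus field_simps)
    also have "\<dots> < 1" using l by simp
    finally show ?thesis .
  qed
  then have "summable (\<lambda>n. p n * exp (-l)^n)" by (intro geo_summable_bound[OF nn bd r]) auto
  then show ?thesis by (simp add: exp_pow2 mult.commute)
qed

lemma F_isCont:
  assumes nn: "\<And>n. 0 \<le> p n" and bd: "\<And>n. p n \<le> B * r^n" and r: "r > 0" and l: "l > ln r"
  shows "isCont (F p) l"
proof -
  have el: "exp (-l) * r < 1"
  proof -
    have "exp (-l) * r = exp (- l + ln r)" using r by (simp add: exp_diff exp_minus field_simps)
    also have "\<dots> < 1" using l by simp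
    finally show ?thesis .
  qed
  define K where "K = (exp (-l) + 1/r) / 2"
  have K1: "exp (-l) < K" using el r by (simp add: K_def field_simps)
  have K2: "K * r < 1" using el r by (simp add: K_def field_simps)
  have "summable (\<lambda>n. p n * K^n)" using K1 K2
    by (intro geo_summable_bound[OF nn bd r]) (auto intro: order.trans[OF _ less_imp_le[OF K1]])
  moreover have "norm (exp (-l)) < norm K" using K1 by simp
  ultimately have "isCont (\<lambda>x. \<Sum>n. p n * exp (- x) ^ n) l"
    by (intro isCont_powser'[where K = K]) (auto intro!: continuous_intros)
  then show ?thesis unfolding F_alt[abs_def] .
qed

lemma F_ennreal:
  assumes "\<And>n. 0 \<le> p n" "summable (\<lambda>n. exp (- l * real n) * p n)"
  shows "(\<Sum>n. ennreal (exp (- l * real n) * p n)) = ennreal (F p l)"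
  unfolding F_def
proof (rule suminf_ennreal2)
  show "\<And>i. 0 \<le> exp (- l * real i) * p i" using assms(1) by simp
qed (rule assms(2))

lemma F_summable_of_ennreal:
  assumes "\<And>n. 0 \<le> p n" "(\<Sum>n. ennreal (exp (- l * real n) * p n)) = ennreal y"
  shows "summable (\<lambda>n. exp (- l * real n) * p n)"
proof (rule summable_suminf_not_top)
  show "\<And>n. 0 \<le> exp (- l * real n) * p n" using assms(1) by simp
  show "(\<Sum>n. ennreal (exp (- l * real n) * p n)) \<noteq> top" using assms(2) by simp
qed

lemma F_nonneg:
  assumes "\<And>n. 0 \<le> p n" "summable (\<lambda>n. exp (- l * real n) * p n)"
  shows "0 \<le> F p l"
  unfolding F_def by (rule suminf_nonneg[OF assms(2)]) (simp add: assms(1))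

lemma F_mono:
  assumes nn: "\<And>n. 0 \<le> p n" and l: "l1 \<le> l2"
    and s1: "summable (\<lambda>n. exp (- l1 * real n) * p n)" and s2: "summable (\<lambda>n. exp (- l2 * real n) * p n)"
  shows "F p l2 \<le> F p l1"
  unfolding F_def
proof (rule suminf_le[OF _ s2 s1])
  fix n
  have "exp (- l2 * real n) \<le> exp (- l1 * real n)" using l by (simp add: mult_right_mono)
  then show "exp (- l2 * real n) * p n \<le> exp (- l1 * real n) * p n"
    using nn by (intro mult_right_mono) auto
qed

lemma F_strict:
  assumes nn: "\<And>n. 0 \<le> p n" and p2: "p 2 > 0" and l: "l1 < l2"
    and s1: "summable (\<lambda>n. exp (- l1 * real n) * p n)" and s2: "summable (\<lambda>n. exp (- l2 * real n) * p n)"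
  shows "F p l2 < F p l1"
proof -
  have "0 < (\<Sum>n. exp (- l1 * real n) * p n - exp (- l2 * real n) * p n)"
  proof (rule suminf_pos2[where i = 2])
    show "summable (\<lambda>n. exp (- l1 * real n) * p n - exp (- l2 * real n) * p n)"
      using s1 s2 by (rule summable_diff)
    fix n
    have "exp (- l2 * real n) \<le> exp (- l1 * real n)" using l by (simp add: mult_right_mono)
    then show "0 \<le> exp (- l1 * real n) * p n - exp (- l2 * real n) * p n"
      using nn[of n] by (simp add: mult_right_mono)
  next
    show "0 < exp (- l1 * real 2) * p 2 - exp (- l2 * real 2) * p 2"
      using p2 l by simp
  qed
  also have "\<dots> = F p l1 - F p l2" unfolding F_def using s1 s2 by (rule suminf_diff[symmetric])
  finally show ?thesis by simp
qed

lemma F_low: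
  assumes nn: "\<And>n. 0 \<le> p n" and y: "0 < y" and S: "(\<Sum>n<N. exp (- l0 * real n) * p n) > y"
  shows "\<exists>a>l0. (\<Sum>n<N. exp (- a * real n) * p n) \<ge> y"
proof -
  define S where "S = (\<Sum>n<N. exp (- l0 * real n) * p n)"
  define t where "t = ln (S / y) / (real N + 1)"
  have Sy: "S > y" using S by (simp add: S_def)
  have tpos: "t > 0" unfolding t_def using Sy y by (intro divide_pos_pos) auto
  have "exp (- t * real N) \<ge> exp (- t * (real N + 1))" using tpos by (simp add: mult_left_mono)
  also have "exp (- t * (real N + 1)) = y / S"
    using Sy y by (simp add: t_def exp_minus ln_div exp_diff)
  finally have et: "exp (- t * real N) \<ge> y / S" .
  have "(\<Sum>n<N. exp (- t * real N) * (exp (- l0 * real n) * p n)) \<le> (\<Sum>n<N. exp (- (l0 + t) * real n) * p n)"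
  proof (rule sum_mono)
    fix n assume "n \<in> {..<N}"
    then have "exp (- t * real N) \<le> exp (- t * real n)" using tpos by (simp add: mult_left_mono)
    then have "exp (- t * real N) * (exp (- l0 * real n) * p n) \<le> exp (- t * real n) * (exp (- l0 * real n) * p n)"
      using nn by (intro mult_right_mono) auto
    also have "\<dots> = exp (- (l0 + t) * real n) * p n" by (simp add: algebra_simps exp_add[symmetric])
    finally show "exp (- t * real N) * (exp (- l0 * real n) * p n) \<le> exp (- (l0 + t) * real n) * p n" .
  qed
  moreover have "(\<Sum>n<N. exp (- t * real N) * (exp (- l0 * real n) * p n)) = exp (- t * real N) * S"
    by (simp add: S_def sum_distrib_left)
  moreover have "y / S * S \<le> exp (- t * real N) * S" using et Sy y by (intro mult_right_mono) auto
  moreover have "y / S * S = y" using Sy y by simp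
  ultimately have "(\<Sum>n<N. exp (- (l0 + t) * real n) * p n) \<ge> y" by linarith
  then show ?thesis using tpos by (intro exI[of _ "l0 + t"]) auto
qed

lemma F_high:
  assumes nn: "\<And>n. 0 \<le> p n" and le1: "\<And>n. p n \<le> 1" and p0: "p 0 = 0" and y: "0 < y"
  shows "\<exists>b>0. \<forall>l\<ge>b. F p l \<le> y"
proof -
  define w where "w = min (1/2) (y/2)"
  have w: "0 < w" "w \<le> 1/2" "w \<le> y/2" using y by (auto simp: w_def)
  define b where "b = - 2 * ln w"
  have bpos: "b > 0" using w by (simp add: b_def ln_less_zero)
  have ebw: "exp (- b / 2) = w" using w by (simp add: b_def)
  show ?thesis
  proof (intro exI[of _ b] conjI allI impI bpos)
    fix l assume lb: "b \<le> l"
    define v where "v = exp (- l / 2)"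
    have v: "0 < v" "v \<le> w" unfolding v_def using lb ebw[symmetric] by auto
    have v1: "v < 1" using v w by simp
    have bound: "exp (- l * real n) * p n \<le> v * v^n" for n
    proof (cases n)
      case 0 then show ?thesis using p0 v by simp
    next
      case (Suc m)
      have "exp (- l * real n) = v^n * v^n" by (simp add: v_def exp_pow[symmetric] exp_add[symmetric] power_mult_distrib[symmetric])
      also have "\<dots> \<le> v * v^n" using Suc v v1 by (intro mult_right_mono) (auto simp: power_le_one intro: power_decreasing[of 1 n v, simplified])
      finally show ?thesis using le1[of n] nn[of n]
        by (smt (verit, best) mult_left_le exp_gt_zero mult_nonneg_nonneg zero_le_power v(1))
    qed
    have sg: "summable (\<lambda>n. v * v^n)" using v v1 by (intro summable_mult summable_geometric) auto
    have "F p l \<le> (\<Sum>n. v * v^n)" unfolding F_def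
      by (rule suminf_le[OF bound _ sg], rule summable_comparison_test'[OF sg]) (use nn bound in auto)
    also have "(\<Sum>n. v * v^n) = v / (1 - v)" using v v1 by (simp add: suminf_mult suminf_geometric)
    also have "\<dots> \<le> 2 * v" using v v1 w by (simp add: field_simps)
    also have "\<dots> \<le> y" using v w by simp
    finally show "F p l \<le> y" .
  qed
qed



abbreviation "HI \<equiv> hitset \<infinity>"

context Tk begin

lemma VI_bound: "VV HI m 1 \<le> c^m + 1 / (2 * real k)"
proof -
  define e0 :: "int \<Rightarrow> real" where "e0 x = (if x = 0 then 1 else 0)" for x
  define eT :: "int \<Rightarrow> real" where "eT x = (if x = 0 then 0 else 1)" for x
  have kpos: "real k > 0" using k2 by simp
  have gamb: "(2 * real k) * (\<Sum>j\<le>m. W H eT j 1) \<le> 1"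
  proof -
    have "(\<Sum>j\<le>m. W H (\<lambda>x. real_of_int \<bar>x\<bar>) j 1) + V H (\<lambda>x. real_of_int \<bar>x\<bar>) m 1 = real_of_int \<bar>1\<bar>"
    proof (rule WV_identity)
      fix x :: int assume "\<not> H x"
      then have "x \<noteq> 0" unfolding HT_iff by auto
      then show "real_of_int \<bar>x - 1\<bar> + real_of_int \<bar>x + 1\<bar> = 2 * real_of_int \<bar>x\<bar>" by linarith
    qed
    moreover have "W H (\<lambda>x. real_of_int \<bar>x\<bar>) j 1 = (2 * real k) * W H eT j 1" for j
    proof -
      have "W H (\<lambda>x. real_of_int \<bar>x\<bar>) j 1 = W H (\<lambda>x. (2 * real k) * eT x) j 1"
        by (rule W_cong) (auto simp: HT_iff eT_def)
      then show ?thesis by (simp only: W_scale)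
    qed
    moreover have "0 \<le> V H (\<lambda>x. real_of_int \<bar>x\<bar>) m 1" by (rule V_nonneg) simp
    ultimately show ?thesis by (simp add: sum_distrib_left)
  qed
  have "(\<Sum>j\<le>m. GG H j 1 - W H eT j 1) \<le> (\<Sum>j\<le>m. GG HI j 1)"
  proof (rule sum_mono)
    fix j
    have "GG H j 1 = W H (\<lambda>x. e0 x + eT x) j 1" by (rule W_cong) (auto simp: e0_def eT_def)
    also have "\<dots> = W H e0 j 1 + W H eT j 1" by (rule W_add)
    finally have "GG H j 1 - W H eT j 1 = W H e0 j 1" by simp
    also have "\<dots> \<le> W HI e0 j 1" by (rule W_le_H) (auto simp: HI_iff HT_iff e0_def)
    also have "\<dots> = GG HI j 1" by (rule W_cong) (auto simp: HI_iff e0_def)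
    finally show "GG H j 1 - W H eT j 1 \<le> GG HI j 1" .
  qed
  moreover have "(\<Sum>j\<le>m. GG H j 1 - W H eT j 1) = (1 - VV H m 1) - (\<Sum>j\<le>m. W H eT j 1)"
    using G_ident[where H=H and m=m and x=1] by (simp add: sum_subtractf)
  moreover have "(\<Sum>j\<le>m. GG HI j 1) = 1 - VV HI m 1"
    using G_ident[where H=HI and m=m and x=1] by simp
  moreover have "(\<Sum>j\<le>m. W H eT j 1) \<le> 1 / (2 * real k)"
    using gamb kpos by (simp add: field_simps)
  ultimately show ?thesis using VT_upper[of m] by linarith
qed

lemma pp_local: "n < 2 * k \<Longrightarrow> pp H n = pp HI n"
proof (cases n)
  case (Suc j)
  assume n: "n < 2 * k"
  have "W H (\<lambda>_. 1) j 1 = W HI (\<lambda>_. 1) j 1"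
  proof (rule W_local)
    fix y :: int assume "\<bar>y - 1\<bar> \<le> int j"
    then have "\<bar>y\<bar> < 2 * int k" using n Suc by linarith
    then show "H y = HI y" unfolding HT_iff HI_iff by auto
  qed
  then show ?thesis using Suc by (simp add: pp_def del: W.simps)
qed simp

lemma ppT_2: "pp H 2 \<ge> 1/2"
  by (rule pp_2) (use k2 in \<open>auto simp: HT_iff\<close>)

end

lemma ppI_2: "pp HI 2 \<ge> 1/2"
  by (rule pp_2) (auto simp: HI_iff)

lemma VI_tendsto: "(\<lambda>m. VV HI m 1) \<longlonglongrightarrow> 0"
proof (rule LIMSEQ_I)
  fix r :: real assume r: "0 < r"
  obtain k :: nat where k: "k \<ge> 2" "1 / (2 * real k) < r / 2"
  proof -
    obtain k0 :: nat where "real k0 > 1 / r" using reals_Archimedean2 by blast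
    define k where "k = max k0 2"
    have "real k > 1 / r" "k \<ge> 2" using \<open>real k0 > 1 / r\<close> by (auto simp: k_def)
    then have "1 / (2 * real k) < r / 2" using r by (simp add: field_simps)
    then show ?thesis using that \<open>k \<ge> 2\<close> by blast
  qed
  interpret Tk k using k by unfold_locales
  have "(\<lambda>n. c^n) \<longlonglongrightarrow> 0" using c_pos c_lt1 by (intro LIMSEQ_power_zero) auto
  then obtain N where N: "\<And>n. n \<ge> N \<Longrightarrow> c^n < r/2"
  proof -
    have "\<forall>\<^sub>F n in sequentially. c^n < r/2" using r by (intro order_tendstoD[OF \<open>(\<lambda>n. c^n) \<longlonglongrightarrow> 0\<close>]) auto
    then obtain N where "\<And>n. n \<ge> N \<Longrightarrow> c^n < r/2" unfolding eventually_sequentially by blast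
    then show ?thesis using that by blast
  qed
  show "\<exists>no. \<forall>n\<ge>no. norm (VV HI n 1 - 0) < r"
  proof (intro exI allI impI)
    fix n assume "N \<le> n"
    then have "VV HI n 1 < r" using VI_bound[of n] N[of n] k by linarith
    moreover have "0 \<le> VV HI n 1" by (rule V_nonneg) simp
    ultimately show "norm (VV HI n 1 - 0) < r" by simp
  qed
qed

lemma ppI_sums: "pp HI sums 1"
proof -
  have "(\<lambda>m. \<Sum>n<m+2. pp HI n) \<longlonglongrightarrow> 1 - 0"
    unfolding pp_partial by (intro tendsto_intros VI_tendsto)
  then have "(\<lambda>m. \<Sum>n<m+2. pp HI n) \<longlonglongrightarrow> 1" by simp
  then show ?thesis unfolding sums_def by (rule LIMSEQ_offset[where k=2])
qed



lemma Q_pp: "Q T l = (\<Sum>n. ennreal (exp (- l * real n) * pp (hitset T) n))"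
  by (simp add: Q_def tau_prob_pp)

context Tk begin

lemma lambda0_eq: "lambda0 (2*k) = ln c"
proof -
  have cp: "cos a > 0" using c_pos by (simp add: c_def)
  have "1 + (tan (pi / real (2*k)))^2 = 1 / c^2"
  proof -
    have "pi / real (2*k) = a" by (simp add: a_def)
    moreover have "1 + (tan a)^2 = 1 / (cos a)^2"
      using cp sin_cos_squared_add[of a] by (simp add: tan_def field_simps power_divide)
    ultimately show ?thesis by (simp add: c_def)
  qed
  then have "lambda0 (2*k) = - (1/2) * ln (1 / c^2)" by (simp add: lambda0_def)
  also have "\<dots> = ln c" using c_pos by (simp add: ln_div ln_realpow)
  finally show ?thesis .
qed

lemma lnc_neg: "ln c < 0" using c_pos c_lt1 by simp

lemma pT_bd: "pp H n \<le> (1/c^2) * c^n" using ppT_bound[of n] by simp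

lemma pT_summable: "l > ln c \<Longrightarrow> summable (\<lambda>n. exp (- l * real n) * pp H n)"
  by (rule F_summable[OF pp_nonneg pT_bd c_pos])

lemma pT_cont: "l > ln c \<Longrightarrow> isCont (F (pp H)) l"
  by (rule F_isCont[OF pp_nonneg pT_bd c_pos])

lemma QT_F: "l > ln c \<Longrightarrow> Q (enat (2*k)) l = ennreal (F (pp H) l)"
  unfolding Q_pp by (rule F_ennreal[OF pp_nonneg pT_summable])

lemma solT_exists:
  assumes y: "y > 0"
  shows "\<exists>l>ln c. F (pp H) l = y"
proof -
  obtain N where N: "(\<Sum>n<N. (1/c)^n * pp H n) > y" using diverge by blast
  have ec: "exp (- ln c) = 1/c" using c_pos by (simp add: exp_minus inverse_eq_divide)
  have "exp (- ln c * real n) = (1/c)^n" for n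
    unfolding exp_pow ec ..
  then have "(\<Sum>n<N. exp (- ln c * real n) * pp H n) > y" using N by simp
  then obtain a where a: "a > ln c" "(\<Sum>n<N. exp (- a * real n) * pp H n) \<ge> y"
    using F_low[where p="pp H", OF pp_nonneg y] by blast
  have Fa: "F (pp H) a \<ge> y"
  proof -
    have "(\<Sum>n<N. exp (- a * real n) * pp H n) \<le> F (pp H) a"
      unfolding F_def by (rule sum_le_suminf[OF pT_summable[OF a(1)]]) (auto intro: pp_nonneg mult_nonneg_nonneg)
    then show ?thesis using a(2) by linarith
  qed
  obtain b where b: "\<forall>l\<ge>b. F (pp H) l \<le> y"
    using F_high[where p="pp H", OF pp_nonneg pp_le1 pp_0 y] by blast
  define b' where "b' = max a b"
  have Fb: "F (pp H) b' \<le> y" using b by (simp add: b'_def)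
  have "continuous_on {a..b'} (F (pp H))"
    using a(1) by (intro continuous_at_imp_continuous_on ballI pT_cont) auto
  then obtain l where "a \<le> l" "l \<le> b'" "F (pp H) l = y"
    using IVT2'[of "F (pp H)" b' y a] Fa Fb by (auto simp: b'_def)
  then show ?thesis using a(1) by (intro exI[of _ l]) auto
qed

lemma solT:
  assumes y: "y > 0"
  shows "ln c < Qinv_fin (2*k) y \<and> F (pp H) (Qinv_fin (2*k) y) = y"
proof -
  have iff: "(lambda0 (2*k) < l \<and> Q (enat (2*k)) l = ennreal y) \<longleftrightarrow> (ln c < l \<and> F (pp H) l = y)" for l
  proof (cases "ln c < l")
    case True
    have "0 \<le> F (pp H) l" by (rule F_nonneg[OF pp_nonneg pT_summable[OF True]])
    then show ?thesis using True y by (simp add: lambda0_eq QT_F)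
  qed (simp add: lambda0_eq)
  have ex1: "\<exists>!l. lambda0 (2*k) < l \<and> Q (enat (2*k)) l = ennreal y"
    unfolding iff
  proof (rule ex_ex1I)
    show "\<exists>l. ln c < l \<and> F (pp H) l = y" using solT_exists[OF y] by blast
  next
    fix l1 l2 assume 1: "ln c < l1 \<and> F (pp H) l1 = y" and 2: "ln c < l2 \<and> F (pp H) l2 = y"
    show "l1 = l2"
    proof (rule ccontr)
      assume "l1 \<noteq> l2"
      then consider "l1 < l2" | "l2 < l1" by linarith
      then show False
      proof cases
        case 3: 1
        have "F (pp H) l2 < F (pp H) l1"
          using F_strict[OF pp_nonneg _ 3 pT_summable pT_summable] ppT_2 1 2 by simp
        then show False using 1 2 by simp
      next
        case 3: 2
        have "F (pp H) l1 < F (pp H) l2"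
          using F_strict[OF pp_nonneg _ 3 pT_summable pT_summable] ppT_2 1 2 by simp
        then show False using 1 2 by simp
      qed
    qed
  qed
  show ?thesis
    using theI'[OF ex1] unfolding Qinv_fin_def iff .
qed

end

abbreviation "pI \<equiv> pp HI"

lemma pI_summable: "l \<ge> 0 \<Longrightarrow> summable (\<lambda>n. exp (- l * real n) * pI n)"
proof (rule summable_comparison_test'[where g = pI])
  show "summable pI" using ppI_sums by (rule sums_summable)
  fix n assume "l \<ge> 0"
  then have "exp (- l * real n) \<le> 1" by simp
  then show "norm (exp (- l * real n) * pI n) \<le> pI n"
    using pp_nonneg[of HI n] by (simp add: mult_left_le_one_le)
qed

lemma pI_cont: "l > 0 \<Longrightarrow> isCont (F pI) l"
  by (rule F_isCont[where B=1 and r=1]) (auto intro: pp_nonneg pp_le1)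

lemma QI_F: "l \<ge> 0 \<Longrightarrow> Q \<infinity> l = ennreal (F pI l)"
  unfolding Q_pp by (rule F_ennreal[OF pp_nonneg pI_summable])

lemma FI_0: "F pI 0 = 1"
  unfolding F_def using ppI_sums by (simp add: sums_iff)

lemma FI_strict: "0 \<le> l1 \<Longrightarrow> l1 < l2 \<Longrightarrow> F pI l2 < F pI l1"
  using F_strict[OF pp_nonneg _ _ pI_summable pI_summable] ppI_2 by simp

lemma solI_exists:
  assumes y: "0 < y" "y \<le> 1"
  shows "\<exists>l\<ge>0. F pI l = y"
proof (cases "y = 1")
  case True then show ?thesis using FI_0 by auto
next
  case False
  then have y1: "y < 1" using y by simp
  have "\<forall>\<^sub>F N in sequentially. (\<Sum>n<N. pI n) > y"
    using ppI_sums y1 unfolding sums_def by (intro order_tendstoD) auto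
  then obtain N where N: "(\<Sum>n<N. pI n) > y" by (meson eventually_sequentially order_refl)
  then have "(\<Sum>n<N. exp (- 0 * real n) * pI n) > y" by simp
  then obtain a where a: "a > 0" "(\<Sum>n<N. exp (- a * real n) * pI n) \<ge> y"
    using F_low[where p=pI, OF pp_nonneg y(1)] by blast
  have Fa: "F pI a \<ge> y"
  proof -
    have "(\<Sum>n<N. exp (- a * real n) * pI n) \<le> F pI a"
      unfolding F_def using a(1) by (intro sum_le_suminf pI_summable) (auto intro: pp_nonneg mult_nonneg_nonneg)
    then show ?thesis using a(2) by linarith
  qed
  obtain b where b: "\<forall>l\<ge>b. F pI l \<le> y"
    using F_high[where p=pI, OF pp_nonneg pp_le1 pp_0 y(1)] by blast
  define b' where "b' = max a b"
  have Fb: "F pI b' \<le> y" using b by (simp add: b'_def)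
  have "continuous_on {a..b'} (F pI)"
    using a(1) by (intro continuous_at_imp_continuous_on ballI pI_cont) auto
  then obtain l where "a \<le> l" "l \<le> b'" "F pI l = y"
    using IVT2'[of "F pI" b' y a] Fa Fb by (auto simp: b'_def)
  then show ?thesis using a(1) by (intro exI[of _ l]) auto
qed

lemma solI:
  assumes y: "0 < y" "y \<le> 1"
  shows "0 \<le> Qinv_inf y \<and> F pI (Qinv_inf y) = y"
proof -
  have iff: "(0 \<le> l \<and> Q \<infinity> l = ennreal y) \<longleftrightarrow> (0 \<le> l \<and> F pI l = y)" for l
  proof (cases "0 \<le> l")
    case True
    have "0 \<le> F pI l" by (rule F_nonneg[OF pp_nonneg pI_summable[OF True]])
    then show ?thesis using True y by (simp add: QI_F)
  qed simp
  have ex1: "\<exists>!l. 0 \<le> l \<and> Q \<infinity> l = ennreal y"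
    unfolding iff
  proof (rule ex_ex1I)
    show "\<exists>l. 0 \<le> l \<and> F pI l = y" using solI_exists[OF y] by blast
  next
    fix l1 l2 assume 1: "0 \<le> l1 \<and> F pI l1 = y" and 2: "0 \<le> l2 \<and> F pI l2 = y"
    show "l1 = l2"
    proof (rule ccontr)
      assume "l1 \<noteq> l2"
      then consider "l1 < l2" | "l2 < l1" by linarith
      then show False
        by cases (use FI_strict 1 2 in fastforce)+
    qed
  qed
  show ?thesis
    using theI'[OF ex1] unfolding Qinv_inf_def iff .
qed



lemma lnc_tendsto: "(\<lambda>k. ln (Tk.c k)) \<longlonglongrightarrow> 0"
proof -
  have "(\<lambda>k. ln (cos (pi / (2 * real k)))) \<longlonglongrightarrow> 0" by real_asymp
  moreover have "\<forall>\<^sub>F k in sequentially. ln (cos (pi / (2 * real k))) = ln (Tk.c k)"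
    using eventually_ge_at_top[of 2]
  proof eventually_elim
    case (elim k)
    then have "Tk k" by (simp add: Tk_def)
    then show ?case by (simp add: Tk.c_def Tk.a_def)
  qed
  ultimately show ?thesis by (rule Lim_transform_eventually)
qed

theorem lemma4:
  fixes \<delta> :: real
  shows "((\<lambda>k::nat. Qinv_fin (2 * k) (exp (- \<delta>)))
           \<longlongrightarrow> Qinv_inf (min (exp (- \<delta>)) 1)) sequentially"
proof -
  define y where "y = exp (- \<delta>)"
  have y: "y > 0" by (simp add: y_def)
  define y' where "y' = min y 1"
  have y': "0 < y'" "y' \<le> 1" "y' \<le> y" using y by (auto simp: y'_def)
  define L where "L = Qinv_inf y'"
  have L: "0 \<le> L" "F pI L = y'" using solI[OF y'(1,2)] by (auto simp: L_def)
  define lT where "lT k = Qinv_fin (2*k) y" for k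
  have sol: "ln (Tk.c k) < lT k \<and> F (pp (hitset (enat (2*k)))) (lT k) = y" if "k \<ge> 2" for k
  proof -
    interpret Tk k using that by unfold_locales
    show ?thesis unfolding lT_def by (rule solT[OF y])
  qed
  have ev2: "\<forall>\<^sub>F k in sequentially. k \<ge> (2::nat)" by (rule eventually_ge_at_top)
  have "lT \<longlonglongrightarrow> L"
  proof (rule order_tendstoI)
    fix a0 assume a0: "a0 < L"
    show "\<forall>\<^sub>F k in sequentially. a0 < lT k"
    proof (cases "a0 < 0")
      case True
      have "\<forall>\<^sub>F k in sequentially. a0 < ln (Tk.c k)"
        using lnc_tendsto True by (rule order_tendstoD)
      then show ?thesis using ev2
      proof eventually_elim
        case (elim k) then show ?case using sol[of k] by linarith
      qed
    next
      case False
      then have a0p: "0 \<le> a0" by simp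
      have "F pI L < F pI a0" by (rule FI_strict[OF a0p a0])
      moreover have "F pI a0 \<le> F pI 0"
        using a0p by (intro F_mono pI_summable) (auto intro: pp_nonneg)
      ultimately have gt: "F pI a0 > y" using L FI_0 y by (auto simp: y'_def)
      have "(\<lambda>N. \<Sum>n<N. exp (- a0 * real n) * pI n) \<longlonglongrightarrow> F pI a0"
        unfolding F_def using pI_summable[OF a0p] by (simp add: summable_LIMSEQ)
      then have "\<forall>\<^sub>F N in sequentially. (\<Sum>n<N. exp (- a0 * real n) * pI n) > y"
        using gt by (rule order_tendstoD)
      then obtain N where N: "(\<Sum>n<N. exp (- a0 * real n) * pI n) > y"
        by (meson eventually_sequentially order_refl)
      have evN: "\<forall>\<^sub>F k in sequentially. k \<ge> N" by (rule eventually_ge_at_top)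
      show ?thesis using ev2 evN
      proof eventually_elim
        case (elim k)
        interpret Tk k using elim by unfold_locales
        have lk: "ln c < lT k" "F (pp H) (lT k) = y" using sol[of k] elim by auto
        have a0c: "ln c < a0" using lnc_neg a0p by linarith
        have "(\<Sum>n<N. exp (- a0 * real n) * pI n) = (\<Sum>n<N. exp (- a0 * real n) * pp H n)"
          using elim by (intro sum.cong refl) (simp add: pp_local)
        also have "\<dots> \<le> F (pp H) a0"
          unfolding F_def by (rule sum_le_suminf[OF pT_summable[OF a0c]]) (auto intro: pp_nonneg mult_nonneg_nonneg)
        finally have Fa: "F (pp H) a0 > y" using N by linarith
        show "a0 < lT k"
        proof (rule ccontr)
          assume "\<not> a0 < lT k"
          then have "F (pp H) a0 \<le> F (pp H) (lT k)"
            using lk a0c by (intro F_mono pT_summable) (auto intro: pp_nonneg)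
          then show False using Fa lk by linarith
        qed
      qed
    qed
  next
    fix b0 assume b0: "L < b0"
    then have b0p: "0 < b0" using L by linarith
    have "F pI b0 < F pI L" by (rule FI_strict[OF L(1) b0])
    then have gap: "F pI b0 < y" using L y' by linarith
    define w where "w = exp (- b0 / 2)"
    have w: "0 < w" "w < 1" using b0p by (auto simp: w_def)
    have "(\<lambda>N. w^N / (1 - w)) \<longlonglongrightarrow> 0 / (1 - w)"
      using w by (intro tendsto_intros LIMSEQ_power_zero) auto
    then have "\<forall>\<^sub>F N in sequentially. w^N / (1 - w) < y - F pI b0"
      using gap by (intro order_tendstoD) auto
    then obtain N where N: "w^N / (1 - w) < y - F pI b0"
      by (meson eventually_sequentially order_refl)
    have evN: "\<forall>\<^sub>F k in sequentially. k \<ge> N" by (rule eventually_ge_at_top)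
    show "\<forall>\<^sub>F k in sequentially. lT k < b0"
      using ev2 evN
    proof eventually_elim
      case (elim k)
      interpret Tk k using elim by unfold_locales
      have lk: "ln c < lT k" "F (pp H) (lT k) = y" using sol[of k] elim by auto
      have b0c: "ln c < b0" using lnc_neg b0p by linarith
      have sg: "summable (\<lambda>n. w^N * w^n)" using w by (intro summable_mult summable_geometric) auto
      have sI: "summable (\<lambda>n. exp (- b0 * real n) * pI n)" using b0p by (intro pI_summable) auto
      have bound: "exp (- b0 * real n) * pp H n \<le> exp (- b0 * real n) * pI n + w^N * w^n" for n
      proof (cases "n < N")
        case True
        then have "pp H n = pI n" using elim by (intro pp_local) auto
        then show ?thesis using w by simp
      next
        case False
        have "exp (- b0 * real n) = w^n * w^n"
          by (simp add: w_def exp_pow2[symmetric] power_mult_distrib[symmetric] exp_add[symmetric])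
        also have "\<dots> \<le> w^N * w^n" using False w
          by (intro mult_right_mono power_decreasing) auto
        finally have "exp (- b0 * real n) * pp H n \<le> w^N * w^n"
          using pp_le1[of H n] pp_nonneg[of H n]
          by (smt (verit) exp_gt_zero mult_left_le)
        moreover have "0 \<le> exp (- b0 * real n) * pI n" using pp_nonneg[of HI n] by simp
        ultimately show ?thesis by linarith
      qed
      have "F (pp H) b0 \<le> (\<Sum>n. exp (- b0 * real n) * pI n + w^N * w^n)"
        unfolding F_def by (rule suminf_le[OF bound pT_summable[OF b0c] summable_add[OF sI sg]])
      also have "\<dots> = F pI b0 + w^N / (1 - w)"
        using sI sg w by (simp add: suminf_add[symmetric] F_def suminf_mult suminf_geometric)
      finally have Fb: "F (pp H) b0 < y" using N by linarith
      show "lT k < b0"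
      proof (rule ccontr)
        assume "\<not> lT k < b0"
        then have "F (pp H) (lT k) \<le> F (pp H) b0"
          using lk b0c by (intro F_mono pT_summable) (auto intro: pp_nonneg)
        then show False using Fb lk by linarith
      qed
    qed
  qed
  then show ?thesis unfolding lT_def L_def y'_def y_def .
qed


end
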